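(* Let $G$ be a locally compact group, $\omega$ a weight on $G$, $1\le p<\infty$, and assume $L^p(G,\omega)$ is a Banach algebra under convolution. If for some positive number $\gamma$ and some $x\in G$ the operator $\gamma\,l_x$ on $L^p(G,\omega)$ is both a left multiplier of $L^p(G,\omega)$ and an algebra isomorphism, then $\gamma=1$ and $x=e_G$.
   Context: A weight on $G$ is a positive continuous function $\omega:G\to\mathbb{R}^+$ with $\omega(xy)\le\omega(x)\omega(y)$ for all $x,y\in G$ and $\omega(e_G)=1$. $L^p(G,\omega)$ is the space of measurable $f:G\to\mathbb{C}$ with $\|f\|_{p,\omega}:=\left(\int_G|f(x)|^p\omega(x)^p\,dx\right)^{1/p}<\infty$, with convolution product. The left translation is $l_xf(y)=f(x^{-1}y)$. A linear operator $L$ on $L^p(G,\omega)$ is a left multiplier if $L(f*g)=L(f)*g$ for all $f,g\in L^p(G,\omega)$. *)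

theory Defs
  imports "HOL-Analysis.Analysis" "HOL-Algebra.Group"
begin

definition lc_group :: "('a::t2_space, 'b) monoid_scheme \<Rightarrow> bool" where
  "lc_group G \<longleftrightarrow> group G \<and> carrier G = UNIV
     \<and> continuous_on UNIV (\<lambda>z::'a \<times> 'a. fst z \<otimes>\<^bsub>G\<^esub> snd z)
     \<and> continuous_on UNIV (\<lambda>x. inv\<^bsub>G\<^esub> x)
     \<and> (\<forall>x::'a. \<exists>K. compact K \<and> x \<in> interior K)"

definition haar_measure :: "('a::t2_space, 'b) monoid_scheme \<Rightarrow> 'a measure \<Rightarrow> bool" where
  "haar_measure G \<mu> \<longleftrightarrow> sets \<mu> = sets borel
     \<and> (\<forall>x A. A \<in> sets borel \<longrightarrow> emeasure \<mu> ((\<lambda>y. x \<otimes>\<^bsub>G\<^esub> y) ` A) = emeasure \<mu> A)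
     \<and> (\<forall>K. compact K \<longrightarrow> emeasure \<mu> K < \<infinity>)
     \<and> (\<forall>U. open U \<longrightarrow> U \<noteq> {} \<longrightarrow> emeasure \<mu> U > 0)
     \<and> (\<forall>A \<in> sets borel. emeasure \<mu> A = (INF U\<in>{U. open U \<and> A \<subseteq> U}. emeasure \<mu> U))
     \<and> (\<forall>U. open U \<longrightarrow> emeasure \<mu> U = (SUP K\<in>{K. compact K \<and> K \<subseteq> U}. emeasure \<mu> K))"

definition weight :: "('a::topological_space, 'b) monoid_scheme \<Rightarrow> ('a \<Rightarrow> real) \<Rightarrow> bool" where
  "weight G \<omega> \<longleftrightarrow> continuous_on UNIV \<omega> \<and> (\<forall>x. \<omega> x > 0)
     \<and> (\<forall>x y. \<omega> (x \<otimes>\<^bsub>G\<^esub> y) \<le> \<omega> x * \<omega> y) \<and> \<omega> \<one>\<^bsub>G\<^esub> = 1"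

text \<open>Elements of the weighted space L^p(G,\<omega>) (representatives; equality is a.e.).\<close>
definition Lpw :: "'a measure \<Rightarrow> real \<Rightarrow> ('a \<Rightarrow> real) \<Rightarrow> ('a \<Rightarrow> complex) set" where
  "Lpw \<mu> p \<omega> = {f. f \<in> borel_measurable \<mu> \<and>
      (\<integral>\<^sup>+ x. ennreal ((norm (f x) * \<omega> x) powr p) \<partial>\<mu>) < \<infinity>}"

definition Lpw_norm :: "'a measure \<Rightarrow> real \<Rightarrow> ('a \<Rightarrow> real) \<Rightarrow> ('a \<Rightarrow> complex) \<Rightarrow> real" where
  "Lpw_norm \<mu> p \<omega> f = (\<integral>x. (norm (f x) * \<omega> x) powr p \<partial>\<mu>) powr (1 / p)"

definition conv :: "('a, 'b) monoid_scheme \<Rightarrow> 'a measure \<Rightarrow> ('a \<Rightarrow> complex) \<Rightarrow> ('a \<Rightarrow> complex) \<Rightarrow> 'a \<Rightarrow> complex" where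
  "conv G \<mu> f g = (\<lambda>y. \<integral>z. f z * g (inv\<^bsub>G\<^esub> z \<otimes>\<^bsub>G\<^esub> y) \<partial>\<mu>)"

definition ltrans :: "('a, 'b) monoid_scheme \<Rightarrow> 'a \<Rightarrow> ('a \<Rightarrow> complex) \<Rightarrow> 'a \<Rightarrow> complex" where
  "ltrans G x f = (\<lambda>y. f (inv\<^bsub>G\<^esub> x \<otimes>\<^bsub>G\<^esub> y))"

definition Lpw_banach_algebra :: "('a, 'b) monoid_scheme \<Rightarrow> 'a measure \<Rightarrow> real \<Rightarrow> ('a \<Rightarrow> real) \<Rightarrow> bool" where
  "Lpw_banach_algebra G \<mu> p \<omega> \<longleftrightarrow> (\<forall>f\<in>Lpw \<mu> p \<omega>. \<forall>g\<in>Lpw \<mu> p \<omega>.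
      conv G \<mu> f g \<in> Lpw \<mu> p \<omega> \<and>
      Lpw_norm \<mu> p \<omega> (conv G \<mu> f g) \<le> Lpw_norm \<mu> p \<omega> f * Lpw_norm \<mu> p \<omega> g)"

text \<open>Operators on L^p(G,\<omega>), acting on representatives; identities hold a.e.\<close>
definition is_Lpw_operator :: "'a measure \<Rightarrow> real \<Rightarrow> ('a \<Rightarrow> real) \<Rightarrow> (('a \<Rightarrow> complex) \<Rightarrow> ('a \<Rightarrow> complex)) \<Rightarrow> bool" where
  "is_Lpw_operator \<mu> p \<omega> L \<longleftrightarrow>
     (\<forall>f\<in>Lpw \<mu> p \<omega>. L f \<in> Lpw \<mu> p \<omega>)
   \<and> (\<forall>f\<in>Lpw \<mu> p \<omega>. \<forall>g\<in>Lpw \<mu> p \<omega>. (AE y in \<mu>. f y = g y) \<longrightarrow> (AE y in \<mu>. L f y = L g y))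
   \<and> (\<forall>f\<in>Lpw \<mu> p \<omega>. \<forall>g\<in>Lpw \<mu> p \<omega>. \<forall>a b::complex.
        AE y in \<mu>. L (\<lambda>t. a * f t + b * g t) y = a * L f y + b * L g y)"

definition left_multiplier :: "('a, 'b) monoid_scheme \<Rightarrow> 'a measure \<Rightarrow> real \<Rightarrow> ('a \<Rightarrow> real) \<Rightarrow> (('a \<Rightarrow> complex) \<Rightarrow> ('a \<Rightarrow> complex)) \<Rightarrow> bool" where
  "left_multiplier G \<mu> p \<omega> L \<longleftrightarrow> is_Lpw_operator \<mu> p \<omega> L \<and>
     (\<forall>f\<in>Lpw \<mu> p \<omega>. \<forall>g\<in>Lpw \<mu> p \<omega>.
        AE y in \<mu>. L (conv G \<mu> f g) y = conv G \<mu> (L f) g y)"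

definition algebra_iso :: "('a, 'b) monoid_scheme \<Rightarrow> 'a measure \<Rightarrow> real \<Rightarrow> ('a \<Rightarrow> real) \<Rightarrow> (('a \<Rightarrow> complex) \<Rightarrow> ('a \<Rightarrow> complex)) \<Rightarrow> bool" where
  "algebra_iso G \<mu> p \<omega> L \<longleftrightarrow> is_Lpw_operator \<mu> p \<omega> L
   \<and> (\<forall>f\<in>Lpw \<mu> p \<omega>. \<forall>g\<in>Lpw \<mu> p \<omega>.
        AE y in \<mu>. L (conv G \<mu> f g) y = conv G \<mu> (L f) (L g) y)
   \<and> (\<forall>f\<in>Lpw \<mu> p \<omega>. \<forall>g\<in>Lpw \<mu> p \<omega>. (AE y in \<mu>. L f y = L g y) \<longrightarrow> (AE y in \<mu>. f y = g y))
   \<and> (\<forall>g\<in>Lpw \<mu> p \<omega>. \<exists>f\<in>Lpw \<mu> p \<omega>. AE y in \<mu>. L f y = g y)"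

end

theory Submission
  imports Defs
begin

lemma lc_cont_mult:
  assumes "lc_group G" "continuous_on UNIV f" "continuous_on UNIV g"
  shows "continuous_on UNIV (\<lambda>t. f t \<otimes>\<^bsub>G\<^esub> g t)"
proof -
  have m: "continuous_on UNIV (\<lambda>z::'a \<times> 'a. fst z \<otimes>\<^bsub>G\<^esub> snd z)"
    using assms(1) unfolding lc_group_def by blast
  have "continuous_on UNIV (\<lambda>t. (f t, g t))"
    using assms(2,3) by (intro continuous_on_Pair)
  from continuous_on_compose2[OF m this] show ?thesis by simp
qed

lemma lc_cont_inv:
  assumes "lc_group G" "continuous_on UNIV f"
  shows "continuous_on UNIV (\<lambda>t. inv\<^bsub>G\<^esub> (f t))"
proof -
  have m: "continuous_on UNIV (\<lambda>x. inv\<^bsub>G\<^esub> x)"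
    using assms(1) unfolding lc_group_def by blast
  from continuous_on_compose2[OF m assms(2)] show ?thesis by simp
qed

lemma ind_Lpw:
  fixes A K :: "'a::t2_space set"
  assumes "sets \<mu> = sets borel" "open A" "A \<subseteq> K" "compact K"
    and "emeasure \<mu> K < \<infinity>" "weight G \<omega>" "1 \<le> p"
  shows "(indicator A :: 'a \<Rightarrow> complex) \<in> Lpw \<mu> p \<omega>"
proof -
  have wc: "continuous_on UNIV \<omega>" and wp: "\<And>x. \<omega> x > 0"
    using assms(6) unfolding weight_def by auto
  have "compact (\<omega> ` K)"
    by (rule compact_continuous_image[OF continuous_on_subset[OF wc] assms(4)]) auto
  then obtain M where M: "\<And>z. z \<in> K \<Longrightarrow> \<omega> z \<le> M"
  proof -
    from compact_imp_bounded[OF \<open>compact (\<omega> ` K)\<close>] obtain a where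
      "\<forall>x\<in>\<omega> ` K. \<bar>x\<bar> \<le> a" unfolding bounded_real by blast
    then have "\<And>z. z \<in> K \<Longrightarrow> \<omega> z \<le> a" by (metis abs_ge_self image_eqI order_trans)
    then show ?thesis using that by blast
  qed
  have Ks: "K \<in> sets \<mu>"
    using assms(1,4) compact_imp_closed borel_closed by (metis)
  have As: "A \<in> sets \<mu>" using assms(1,2) by simp
  have meas: "(indicator A :: 'a \<Rightarrow> complex) \<in> borel_measurable \<mu>"
    using As by (rule borel_measurable_indicator)
  have "(\<integral>\<^sup>+ x. ennreal ((norm (indicator A x :: complex) * \<omega> x) powr p) \<partial>\<mu>)
        \<le> (\<integral>\<^sup>+ x. ennreal (M powr p) * indicator K x \<partial>\<mu>)"
  proof (rule nn_integral_mono)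
    fix x
    show "ennreal ((norm (indicator A x :: complex) * \<omega> x) powr p)
        \<le> ennreal (M powr p) * indicator K x"
    proof (cases "x \<in> A")
      case True
      then have "x \<in> K" using assms(3) by auto
      then have "\<omega> x powr p \<le> M powr p"
        using M wp assms(7) by (intro powr_mono2) (auto intro: less_imp_le)
      then show ?thesis using True \<open>x \<in> K\<close> by (simp add: ennreal_leI)
    next
      case False
      then show ?thesis using assms(7) by simp
    qed
  qed
  also have "\<dots> = ennreal (M powr p) * emeasure \<mu> K"
    using Ks by (rule nn_integral_cmult_indicator)
  also have "\<dots> < \<infinity>" using assms(5) by (simp add: ennreal_mult_less_top)
  finally show ?thesis unfolding Lpw_def using meas by simp
qed

lemma conv_ind:
  fixes A V :: "'a::t2_space set" and c d :: complex
  assumes "sets \<mu> = sets borel"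
  shows "conv G \<mu> (\<lambda>z. c * indicator A (a \<otimes>\<^bsub>G\<^esub> z)) (\<lambda>z. d * indicator V (a \<otimes>\<^bsub>G\<^esub> z)) y
     = c * d * complex_of_real (measure \<mu> {z. a \<otimes>\<^bsub>G\<^esub> z \<in> A \<and> a \<otimes>\<^bsub>G\<^esub> (inv\<^bsub>G\<^esub> z \<otimes>\<^bsub>G\<^esub> y) \<in> V})"
proof -
  let ?S = "{z. a \<otimes>\<^bsub>G\<^esub> z \<in> A \<and> a \<otimes>\<^bsub>G\<^esub> (inv\<^bsub>G\<^esub> z \<otimes>\<^bsub>G\<^esub> y) \<in> V}"
  have sp: "space \<mu> = UNIV" using sets_eq_imp_space_eq[OF assms] by simp
  have "conv G \<mu> (\<lambda>z. c * indicator A (a \<otimes>\<^bsub>G\<^esub> z)) (\<lambda>z. d * indicator V (a \<otimes>\<^bsub>G\<^esub> z)) y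
     = (\<integral>z. c * d * complex_of_real (indicator ?S z) \<partial>\<mu>)"
    unfolding conv_def by (rule Bochner_Integration.integral_cong) (auto simp: indicator_def)
  then show ?thesis using sp by simp
qed

lemma AE_exists:
  assumes "AE y in \<mu>. P y" "Y \<in> sets \<mu>" "emeasure \<mu> Y > 0"
  shows "\<exists>y\<in>Y. P y"
proof (rule ccontr)
  assume nP: "\<not> (\<exists>y\<in>Y. P y)"
  from assms(1) obtain N where N: "{x \<in> space \<mu>. \<not> P x} \<subseteq> N" "emeasure \<mu> N = 0" "N \<in> sets \<mu>"
    by (rule AE_E)
  have "Y \<subseteq> N" using N(1) nP sets.sets_into_space[OF assms(2)] by auto
  then have "emeasure \<mu> Y \<le> emeasure \<mu> N" using N(3) by (rule emeasure_mono)
  then show False using N(2) assms(3) by simp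
qed

lemma (in group) cancel_aux[simp]:
  "a \<in> carrier G \<Longrightarrow> b \<in> carrier G \<Longrightarrow> a \<otimes> (inv a \<otimes> b) = b"
  by (simp add: m_assoc[symmetric])

lemma (in group) idA:
  assumes "x \<in> carrier G" "y \<in> carrier G" "z \<in> carrier G"
  shows "(inv x \<otimes> y) \<otimes> inv (inv x \<otimes> (inv z \<otimes> y)) \<otimes> inv x = inv x \<otimes> z"
  using assms by (simp add: inv_mult_group m_assoc)

lemma (in group) idB:
  assumes "w \<in> carrier G" "z \<in> carrier G"
  shows "w \<otimes> inv (inv z \<otimes> w) = z"
  using assms by (simp add: inv_mult_group m_assoc)

lemma (in group) idC:
  assumes "x \<in> carrier G" "y \<in> carrier G"
  shows "inv x \<otimes> (inv (y \<otimes> inv x) \<otimes> y) = \<one>"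
  using assms by (simp add: inv_mult_group m_assoc)

lemma pos_measure:
  assumes "emeasure \<mu> T > 0" "emeasure \<mu> T < \<infinity>"
  shows "measure \<mu> T > 0"
  using assms by (simp add: measure_def enn2real_positive_iff)

theorem lemma1p4:
  fixes G :: "('a::t2_space, 'b) monoid_scheme" and \<mu> :: "'a measure"
    and \<omega> :: "'a \<Rightarrow> real" and p \<gamma> :: real and x :: 'a
  assumes "lc_group G" and "haar_measure G \<mu>" and "weight G \<omega>"
    and "1 \<le> p"
    and "Lpw_banach_algebra G \<mu> p \<omega>"
    and "\<gamma> > 0"
    and "left_multiplier G \<mu> p \<omega> (\<lambda>f y. complex_of_real \<gamma> * ltrans G x f y)"
    and "algebra_iso G \<mu> p \<omega> (\<lambda>f y. complex_of_real \<gamma> * ltrans G x f y)"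
  shows "\<gamma> = 1 \<and> x = \<one>\<^bsub>G\<^esub>"
proof -
  have grp: "group G" and car: "carrier G = UNIV"
    and lcK: "\<forall>x::'a. \<exists>K. compact K \<and> x \<in> interior K"
    using assms(1) unfolding lc_group_def by auto
  interpret group G by (rule grp)
  note car[simp]
  have cm: "\<And>f g. continuous_on UNIV f \<Longrightarrow> continuous_on UNIV g \<Longrightarrow>
      continuous_on UNIV (\<lambda>t. f t \<otimes>\<^bsub>G\<^esub> g t)"
    using lc_cont_mult[OF assms(1)] by blast
  have ci: "\<And>f. continuous_on UNIV f \<Longrightarrow> continuous_on UNIV (\<lambda>t. inv\<^bsub>G\<^esub> (f t))"
    using lc_cont_inv[OF assms(1)] by blast
  note H = assms(2)[unfolded haar_measure_def]
  have sets: "sets \<mu> = sets borel"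
    using conjunct1[OF H] .
  have inv_tr: "\<And>x A. A \<in> sets borel \<Longrightarrow> emeasure \<mu> ((\<lambda>y. x \<otimes>\<^bsub>G\<^esub> y) ` A) = emeasure \<mu> A"
    using conjunct1[OF conjunct2[OF H]] by blast
  have cfin: "\<And>K. compact K \<Longrightarrow> emeasure \<mu> K < \<infinity>"
    using conjunct1[OF conjunct2[OF conjunct2[OF H]]] by blast
  have opos: "\<And>U. open U \<Longrightarrow> U \<noteq> {} \<Longrightarrow> emeasure \<mu> U > 0"
    using conjunct1[OF conjunct2[OF conjunct2[OF conjunct2[OF H]]]] by blast
  have sp: "space \<mu> = UNIV" using sets_eq_imp_space_eq[OF sets] by simp
  obtain K where K: "compact K" "\<one>\<^bsub>G\<^esub> \<in> interior K" using lcK by blast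
  have Kfin: "emeasure \<mu> K < \<infinity>" using cfin K(1) by blast
  have Ks: "K \<in> sets \<mu>" using sets K(1) compact_imp_closed borel_closed by metis
  have iso: "\<forall>f\<in>Lpw \<mu> p \<omega>. \<forall>g\<in>Lpw \<mu> p \<omega>.
        AE y in \<mu>. complex_of_real \<gamma> * ltrans G x (conv G \<mu> f g) y
          = conv G \<mu> (\<lambda>y. complex_of_real \<gamma> * ltrans G x f y) (\<lambda>y. complex_of_real \<gamma> * ltrans G x g y) y"
    using assms(8) unfolding algebra_iso_def by blast
  have key: "AE y in \<mu>. complex_of_real \<gamma> * complex_of_real (measure \<mu> {z. z \<in> A \<and> inv\<^bsub>G\<^esub> z \<otimes>\<^bsub>G\<^esub> (inv\<^bsub>G\<^esub> x \<otimes>\<^bsub>G\<^esub> y) \<in> V})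
      = complex_of_real \<gamma> * complex_of_real \<gamma> * complex_of_real (measure \<mu> {z. inv\<^bsub>G\<^esub> x \<otimes>\<^bsub>G\<^esub> z \<in> A \<and> inv\<^bsub>G\<^esub> x \<otimes>\<^bsub>G\<^esub> (inv\<^bsub>G\<^esub> z \<otimes>\<^bsub>G\<^esub> y) \<in> V})"
    if "open A" "open V" "A \<subseteq> K" "V \<subseteq> K" for A V
  proof -
    have fA: "(indicator A :: 'a \<Rightarrow> complex) \<in> Lpw \<mu> p \<omega>"
      using ind_Lpw[OF sets that(1) that(3) K(1) Kfin assms(3,4)] .
    have fV: "(indicator V :: 'a \<Rightarrow> complex) \<in> Lpw \<mu> p \<omega>"
      using ind_Lpw[OF sets that(2) that(4) K(1) Kfin assms(3,4)] .
    have c1: "\<And>w. conv G \<mu> (indicator A) (indicator V) w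
        = complex_of_real (measure \<mu> {z. z \<in> A \<and> inv\<^bsub>G\<^esub> z \<otimes>\<^bsub>G\<^esub> w \<in> V})"
      using conv_ind[OF sets, of G 1 A "\<one>\<^bsub>G\<^esub>" 1 V] using car by simp
    have c2: "\<And>y. conv G \<mu> (\<lambda>y. complex_of_real \<gamma> * ltrans G x (indicator A) y)
         (\<lambda>y. complex_of_real \<gamma> * ltrans G x (indicator V) y) y
       = complex_of_real \<gamma> * complex_of_real \<gamma> * complex_of_real (measure \<mu> {z. inv\<^bsub>G\<^esub> x \<otimes>\<^bsub>G\<^esub> z \<in> A \<and> inv\<^bsub>G\<^esub> x \<otimes>\<^bsub>G\<^esub> (inv\<^bsub>G\<^esub> z \<otimes>\<^bsub>G\<^esub> y) \<in> V})"
      unfolding ltrans_def using conv_ind[OF sets, of G "complex_of_real \<gamma>" A "inv\<^bsub>G\<^esub> x" "complex_of_real \<gamma>" V] by simp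
    from iso fA fV have "AE y in \<mu>. complex_of_real \<gamma> * ltrans G x (conv G \<mu> (indicator A) (indicator V)) y
          = conv G \<mu> (\<lambda>y. complex_of_real \<gamma> * ltrans G x (indicator A) y) (\<lambda>y. complex_of_real \<gamma> * ltrans G x (indicator V) y) y"
      by blast
    then show ?thesis
      by (rule eventually_mono) (simp add: c1 c2[unfolded ltrans_def] ltrans_def)
  qed
  define U0 where "U0 = interior K"
  have U0: "open U0" "U0 \<subseteq> K" "\<one>\<^bsub>G\<^esub> \<in> U0" using K unfolding U0_def by (auto simp: interior_subset)
  have x1: "x = \<one>\<^bsub>G\<^esub>"
  proof (rule ccontr)
    assume "x \<noteq> \<one>\<^bsub>G\<^esub>"
    then obtain A0 B where AB: "open A0" "open B" "\<one>\<^bsub>G\<^esub> \<in> A0" "x \<in> B" "A0 \<inter> B = {}"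
      using hausdorff[of "\<one>\<^bsub>G\<^esub>" x] by blast
    define A where "A = A0 \<inter> U0"
    have A: "open A" "A \<subseteq> K" "\<one>\<^bsub>G\<^esub> \<in> A" "A \<inter> B = {}"
      using AB U0 unfolding A_def by auto
    define P where "P = (\<lambda>q. fst q \<otimes>\<^bsub>G\<^esub> inv\<^bsub>G\<^esub> (snd q)) -` B \<inter> (\<lambda>q. fst q \<otimes>\<^bsub>G\<^esub> inv\<^bsub>G\<^esub> (snd q) \<otimes>\<^bsub>G\<^esub> inv\<^bsub>G\<^esub> x) -` A"
    have contf: "continuous_on UNIV (\<lambda>q::'a\<times>'a. fst q \<otimes>\<^bsub>G\<^esub> inv\<^bsub>G\<^esub> (snd q))"
      by (intro cm ci continuous_intros)
    have "open P" unfolding P_def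
      by (intro open_Int open_vimage AB A cm ci continuous_intros)
    moreover have "(x, \<one>\<^bsub>G\<^esub>) \<in> P" unfolding P_def using AB A by simp
    ultimately obtain Y V0 where YV: "open Y" "open V0" "(x, \<one>\<^bsub>G\<^esub>) \<in> Y \<times> V0" "Y \<times> V0 \<subseteq> P"
      by (rule open_prod_elim)
    define V where "V = V0 \<inter> U0"
    have V: "open V" "V \<subseteq> K" "\<one>\<^bsub>G\<^esub> \<in> V" using YV U0 unfolding V_def by auto
    define Yy where "Yy = (\<lambda>y. inv\<^bsub>G\<^esub> x \<otimes>\<^bsub>G\<^esub> y) -` Y"
    have "open Yy" unfolding Yy_def by (intro open_vimage YV cm continuous_intros)
    moreover have "x \<otimes>\<^bsub>G\<^esub> x \<in> Yy" using YV unfolding Yy_def by (simp add: m_assoc[symmetric])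
    ultimately have Yyp: "Yy \<in> sets \<mu>" "emeasure \<mu> Yy > 0" using sets opos by auto
    from AE_exists[OF key[OF A(1) V(1) A(2) V(2)] Yyp] obtain y where y: "y \<in> Yy" and
      eq: "complex_of_real \<gamma> * complex_of_real (measure \<mu> {z. z \<in> A \<and> inv\<^bsub>G\<^esub> z \<otimes>\<^bsub>G\<^esub> (inv\<^bsub>G\<^esub> x \<otimes>\<^bsub>G\<^esub> y) \<in> V})
      = complex_of_real \<gamma> * complex_of_real \<gamma> * complex_of_real (measure \<mu> {z. inv\<^bsub>G\<^esub> x \<otimes>\<^bsub>G\<^esub> z \<in> A \<and> inv\<^bsub>G\<^esub> x \<otimes>\<^bsub>G\<^esub> (inv\<^bsub>G\<^esub> z \<otimes>\<^bsub>G\<^esub> y) \<in> V})"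
      by blast
    have w: "inv\<^bsub>G\<^esub> x \<otimes>\<^bsub>G\<^esub> y \<in> Y" using y unfolding Yy_def by simp
    have S1: "{z. z \<in> A \<and> inv\<^bsub>G\<^esub> z \<otimes>\<^bsub>G\<^esub> (inv\<^bsub>G\<^esub> x \<otimes>\<^bsub>G\<^esub> y) \<in> V} = {}"
    proof (safe)
      fix z assume z: "z \<in> A" "inv\<^bsub>G\<^esub> z \<otimes>\<^bsub>G\<^esub> (inv\<^bsub>G\<^esub> x \<otimes>\<^bsub>G\<^esub> y) \<in> V"
      then have "(inv\<^bsub>G\<^esub> x \<otimes>\<^bsub>G\<^esub> y, inv\<^bsub>G\<^esub> z \<otimes>\<^bsub>G\<^esub> (inv\<^bsub>G\<^esub> x \<otimes>\<^bsub>G\<^esub> y)) \<in> P" using YV w unfolding V_def by blast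
      then have "(inv\<^bsub>G\<^esub> x \<otimes>\<^bsub>G\<^esub> y) \<otimes>\<^bsub>G\<^esub> inv\<^bsub>G\<^esub> (inv\<^bsub>G\<^esub> z \<otimes>\<^bsub>G\<^esub> (inv\<^bsub>G\<^esub> x \<otimes>\<^bsub>G\<^esub> y)) \<in> B" unfolding P_def by simp
      then have "z \<in> B" using idB[of "inv\<^bsub>G\<^esub> x \<otimes>\<^bsub>G\<^esub> y" z] car by simp
      then show "z \<in> {}" using z A(4) by blast
    qed
    define T where "T = {z. inv\<^bsub>G\<^esub> x \<otimes>\<^bsub>G\<^esub> (inv\<^bsub>G\<^esub> z \<otimes>\<^bsub>G\<^esub> y) \<in> V}"
    have S2: "{z. inv\<^bsub>G\<^esub> x \<otimes>\<^bsub>G\<^esub> z \<in> A \<and> inv\<^bsub>G\<^esub> x \<otimes>\<^bsub>G\<^esub> (inv\<^bsub>G\<^esub> z \<otimes>\<^bsub>G\<^esub> y) \<in> V} = T"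
    proof -
      have *: "inv\<^bsub>G\<^esub> x \<otimes>\<^bsub>G\<^esub> z \<in> A" if z: "inv\<^bsub>G\<^esub> x \<otimes>\<^bsub>G\<^esub> (inv\<^bsub>G\<^esub> z \<otimes>\<^bsub>G\<^esub> y) \<in> V" for z
      proof -
      from z have "(inv\<^bsub>G\<^esub> x \<otimes>\<^bsub>G\<^esub> y, inv\<^bsub>G\<^esub> x \<otimes>\<^bsub>G\<^esub> (inv\<^bsub>G\<^esub> z \<otimes>\<^bsub>G\<^esub> y)) \<in> P" using YV w unfolding V_def by blast
      then have "(inv\<^bsub>G\<^esub> x \<otimes>\<^bsub>G\<^esub> y) \<otimes>\<^bsub>G\<^esub> inv\<^bsub>G\<^esub> (inv\<^bsub>G\<^esub> x \<otimes>\<^bsub>G\<^esub> (inv\<^bsub>G\<^esub> z \<otimes>\<^bsub>G\<^esub> y)) \<otimes>\<^bsub>G\<^esub> inv\<^bsub>G\<^esub> x \<in> A" unfolding P_def by simp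
      then show ?thesis using idA[of x y z] car by simp
      qed
      then show ?thesis unfolding T_def by blast
    qed
    have "T = (\<lambda>z. inv\<^bsub>G\<^esub> x \<otimes>\<^bsub>G\<^esub> (inv\<^bsub>G\<^esub> z \<otimes>\<^bsub>G\<^esub> y)) -` V" by (auto simp: T_def)
    then have "open T" by (simp only:) (intro open_vimage V cm ci continuous_intros)
    moreover have "y \<otimes>\<^bsub>G\<^esub> inv\<^bsub>G\<^esub> x \<in> T" unfolding T_def using idC[of x y] car V by simp
    ultimately have Tpos: "emeasure \<mu> T > 0" using opos by blast
    have "T \<subseteq> (\<lambda>u. x \<otimes>\<^bsub>G\<^esub> u) ` A"
    proof
      fix z assume "z \<in> T"
      then have "inv\<^bsub>G\<^esub> x \<otimes>\<^bsub>G\<^esub> z \<in> A" using S2 by blast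
      moreover have "z = x \<otimes>\<^bsub>G\<^esub> (inv\<^bsub>G\<^esub> x \<otimes>\<^bsub>G\<^esub> z)" using car by (simp add: m_assoc[symmetric])
      ultimately show "z \<in> (\<lambda>u. x \<otimes>\<^bsub>G\<^esub> u) ` A" by blast
    qed
    then have "emeasure \<mu> T \<le> emeasure \<mu> ((\<lambda>u. x \<otimes>\<^bsub>G\<^esub> u) ` A)"
    proof (rule emeasure_mono)
      have "(\<lambda>u. x \<otimes>\<^bsub>G\<^esub> u) ` A = (\<lambda>u. inv\<^bsub>G\<^esub> x \<otimes>\<^bsub>G\<^esub> u) -` A"
      proof (intro Set.set_eqI iffI)
        fix u assume "u \<in> (\<lambda>u. x \<otimes>\<^bsub>G\<^esub> u) ` A"
        then show "u \<in> (\<lambda>u. inv\<^bsub>G\<^esub> x \<otimes>\<^bsub>G\<^esub> u) -` A" by (auto simp: m_assoc[symmetric])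
      next
        fix u assume "u \<in> (\<lambda>u. inv\<^bsub>G\<^esub> x \<otimes>\<^bsub>G\<^esub> u) -` A"
        moreover have "u = x \<otimes>\<^bsub>G\<^esub> (inv\<^bsub>G\<^esub> x \<otimes>\<^bsub>G\<^esub> u)" by simp
        ultimately show "u \<in> (\<lambda>u. x \<otimes>\<^bsub>G\<^esub> u) ` A" by (metis image_eqI vimageE)
      qed
      moreover have "open ((\<lambda>u. inv\<^bsub>G\<^esub> x \<otimes>\<^bsub>G\<^esub> u) -` A)"
        by (intro open_vimage A cm continuous_intros)
      ultimately show "(\<lambda>u. x \<otimes>\<^bsub>G\<^esub> u) ` A \<in> sets \<mu>" using sets by simp
    qed
    also have "\<dots> = emeasure \<mu> A" using inv_tr A by simp
    also have "\<dots> \<le> emeasure \<mu> K"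
      using A Ks by (intro emeasure_mono) auto
    finally have "emeasure \<mu> T < \<infinity>" using Kfin by simp
    with Tpos have "measure \<mu> T > 0" by (rule pos_measure)
    with eq S1 S2 assms(6) show False by simp
  qed
  have g1: "\<gamma> = 1"
  proof -
    have "U0 \<in> sets \<mu>" "emeasure \<mu> U0 > 0" using U0 sets opos by auto
    from AE_exists[OF key[OF U0(1) U0(1) U0(2) U0(2)] this] obtain y where y: "y \<in> U0" and
      eq: "complex_of_real \<gamma> * complex_of_real (measure \<mu> {z. z \<in> U0 \<and> inv\<^bsub>G\<^esub> z \<otimes>\<^bsub>G\<^esub> (inv\<^bsub>G\<^esub> x \<otimes>\<^bsub>G\<^esub> y) \<in> U0})
      = complex_of_real \<gamma> * complex_of_real \<gamma> * complex_of_real (measure \<mu> {z. inv\<^bsub>G\<^esub> x \<otimes>\<^bsub>G\<^esub> z \<in> U0 \<and> inv\<^bsub>G\<^esub> x \<otimes>\<^bsub>G\<^esub> (inv\<^bsub>G\<^esub> z \<otimes>\<^bsub>G\<^esub> y) \<in> U0})"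
      by blast
    define T where "T = {z. z \<in> U0 \<and> inv\<^bsub>G\<^esub> z \<otimes>\<^bsub>G\<^esub> y \<in> U0}"
    have "T = U0 \<inter> (\<lambda>z. inv\<^bsub>G\<^esub> z \<otimes>\<^bsub>G\<^esub> y) -` U0" by (auto simp: T_def)
    then have "open T" by (simp only:) (intro open_Int open_vimage U0 cm ci continuous_intros)
    moreover have "y \<in> T" unfolding T_def using y U0 car by simp
    ultimately have Tpos: "emeasure \<mu> T > 0" using opos by blast
    have "emeasure \<mu> T \<le> emeasure \<mu> K"
      using Ks U0 by (intro emeasure_mono) (auto simp: T_def)
    then have "emeasure \<mu> T < \<infinity>" using Kfin by simp
    with Tpos have mp: "measure \<mu> T > 0" by (rule pos_measure)
    from eq have "complex_of_real (\<gamma> * measure \<mu> T) = complex_of_real (\<gamma> * \<gamma> * measure \<mu> T)"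
      using x1 car by (simp add: T_def)
    then have "\<gamma> * measure \<mu> T = \<gamma> * \<gamma> * measure \<mu> T" using of_real_eq_iff by blast
    then show ?thesis using mp assms(6) by simp
  qed
  show ?thesis using g1 x1 by simp
qed

end
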